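(* Let $(X,\tau)$ be a $\mathbb{B}$-topological space. Then $(X,\tau)$ is d-sober if and only if every irreducible closed set $\gamma$ of $(X,\tau)$ satisfying (a) for every closed set $\mu$ of $(X,\tau)$ with $\mu(z)\neq0$ for all $z\in X$, either $tt\wedge\gamma\le\mu$ or $ff\wedge\gamma\le\mu$, and (b) for every closed set $\mu$ of $(X,\tau)$ with $\mu(z)\neq1$ for all $z\in X$, $\gamma\not\le\mu$, equals the closure $\overline{1_x}$ for a unique point $x\in X$.
   Context: $\mathbb{B}=\{0,1,tt,ff\}$ is the four-element Boolean algebra with bottom $0$, top $1$, and $tt,ff$ incomparable complements; $\neg$ is its complement, $a\to b=\neg a\vee b$. $\mathbb{B}^X$ has pointwise order/operations; $b_X$ is the constant map $b$; $1_x$ sends $x$ to $1$ and others to $0$; $(b\wedge\lambda)(x)=b\wedge\lambda(x)$; $\lambda[b]=\{x:\lambda(x)\ge b\}$. A $\mathbb{B}$-topology $\tau\subseteq\mathbb{B}^X$ contains all constants and is closed under arbitrary joins and finite meets; $\gamma$ is closed if $\neg\gamma\in\tau$; $\overline{\lambda}$ is the meet of all closed sets above $\lambda$. $(X,\tau)$ is identified with the bitopological space $(X,\tau[tt],\tau[ff])$, $\tau[b]=\{\lambda[b]:\lambda\in\tau\}$. $\mathrm{sub}_X(\lambda,\mu)=\bigwedge_x(\lambda(x)\to\mu(x))$. A closed set $\gamma$ is irreducible if $\mathrm{sub}_X(\gamma,b_X)=b$ for all $b\in\mathbb{B}$ and $\mathrm{sub}_X(\gamma,\mu_1\vee\mu_2)=\mathrm{sub}_X(\gamma,\mu_1)\vee\mathrm{sub}_X(\gamma,\mu_2)$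 for all closed $\mu_1,\mu_2$. A d-point of $(X,\tau[tt],\tau[ff])$ is a pair of frame homomorphisms $p_{tt}\colon\tau[tt]\to\{0,1\}$, $p_{ff}\colon\tau[ff]\to\{0,1\}$ such that: if $U\in\tau[tt]$, $V\in\tau[ff]$, $U\cap V=\emptyset$ then $p_{tt}(U)=0$ or $p_{ff}(V)=0$; and if $U\cup V=X$ then $p_{tt}(U)=1$ or $p_{ff}(V)=1$. Each $x$ gives the d-point $[x]$ with $[x]_{tt}(U)=1\iff x\in U$, $[x]_{ff}(V)=1\iff x\in V$. The space is d-sober if every d-point is $[x]$ for a unique $x$. *)

theory Defs
  imports Main "HOL-Library.Product_Order"
begin

text \<open>The four-element Boolean algebra B = {0,1,tt,ff}, realised as bool \<times> bool with the
componentwise order: 0 = (False,False), 1 = (True,True), tt = (True,False), ff = (False,True).\<close>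

type_synonym B4 = "bool \<times> bool"

definition tt :: B4 where "tt = (True, False)"
definition ff :: B4 where "ff = (False, True)"

definition bimp :: "B4 \<Rightarrow> B4 \<Rightarrow> B4" where "bimp a b = sup (- a) b"

text \<open>B-valued sets on the ground type 'a (X = UNIV); B^X ordered pointwise.\<close>

definition Btopology :: "('a \<Rightarrow> B4) set \<Rightarrow> bool" where
  "Btopology \<tau> \<longleftrightarrow>
     (\<forall>b. (\<lambda>_. b) \<in> \<tau>) \<and>
     (\<forall>S. S \<subseteq> \<tau> \<longrightarrow> Sup S \<in> \<tau>) \<and>
     (\<forall>l m. l \<in> \<tau> \<longrightarrow> m \<in> \<tau> \<longrightarrow> inf l m \<in> \<tau>)"

definition Bclosed :: "('a \<Rightarrow> B4) set \<Rightarrow> ('a \<Rightarrow> B4) \<Rightarrow> bool" where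
  "Bclosed \<tau> g \<longleftrightarrow> - g \<in> \<tau>"

definition Bclosure :: "('a \<Rightarrow> B4) set \<Rightarrow> ('a \<Rightarrow> B4) \<Rightarrow> ('a \<Rightarrow> B4)" where
  "Bclosure \<tau> l = Inf {g. Bclosed \<tau> g \<and> l \<le> g}"

definition Bpoint :: "'a \<Rightarrow> ('a \<Rightarrow> B4)" where
  "Bpoint x = (\<lambda>y. if y = x then top else bot)"

definition Bscal :: "B4 \<Rightarrow> ('a \<Rightarrow> B4) \<Rightarrow> ('a \<Rightarrow> B4)" where
  "Bscal b l = (\<lambda>x. inf b (l x))"

definition Bsub :: "('a \<Rightarrow> B4) \<Rightarrow> ('a \<Rightarrow> B4) \<Rightarrow> B4" where
  "Bsub l m = (INF x. bimp (l x) (m x))"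

definition Birreducible :: "('a \<Rightarrow> B4) set \<Rightarrow> ('a \<Rightarrow> B4) \<Rightarrow> bool" where
  "Birreducible \<tau> g \<longleftrightarrow> Bclosed \<tau> g \<and>
     (\<forall>b. Bsub g (\<lambda>_. b) = b) \<and>
     (\<forall>m1 m2. Bclosed \<tau> m1 \<longrightarrow> Bclosed \<tau> m2 \<longrightarrow>
        Bsub g (sup m1 m2) = sup (Bsub g m1) (Bsub g m2))"

definition Bcut :: "('a \<Rightarrow> B4) \<Rightarrow> B4 \<Rightarrow> 'a set" where
  "Bcut l b = {x. b \<le> l x}"

definition Blevel :: "('a \<Rightarrow> B4) set \<Rightarrow> B4 \<Rightarrow> 'a set set" where
  "Blevel \<tau> b = (\<lambda>l. Bcut l b) ` \<tau>"

definition frame_hom :: "'a set set \<Rightarrow> ('a set \<Rightarrow> bool) \<Rightarrow> bool" where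
  "frame_hom T p \<longleftrightarrow>
     p UNIV \<and>
     (\<forall>U V. U \<in> T \<longrightarrow> V \<in> T \<longrightarrow> p (U \<inter> V) = (p U \<and> p V)) \<and>
     (\<forall>S. S \<subseteq> T \<longrightarrow> p (\<Union>S) = (\<exists>U\<in>S. p U))"

definition d_point :: "'a set set \<Rightarrow> 'a set set \<Rightarrow> ('a set \<Rightarrow> bool) \<Rightarrow> ('a set \<Rightarrow> bool) \<Rightarrow> bool" where
  "d_point T1 T2 p1 p2 \<longleftrightarrow> frame_hom T1 p1 \<and> frame_hom T2 p2 \<and>
     (\<forall>U V. U \<in> T1 \<longrightarrow> V \<in> T2 \<longrightarrow> U \<inter> V = {} \<longrightarrow> \<not> p1 U \<or> \<not> p2 V) \<and>
     (\<forall>U V. U \<in> T1 \<longrightarrow> V \<in> T2 \<longrightarrow> U \<union> V = UNIV \<longrightarrow> p1 U \<or> p2 V)"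

text \<open>The d-point p equals [x]: agreement on the respective topologies.\<close>

definition d_sober :: "'a set set \<Rightarrow> 'a set set \<Rightarrow> bool" where
  "d_sober T1 T2 \<longleftrightarrow> (\<forall>p1 p2. d_point T1 T2 p1 p2 \<longrightarrow>
     (\<exists>!x. (\<forall>U\<in>T1. p1 U = (x \<in> U)) \<and> (\<forall>V\<in>T2. p2 V = (x \<in> V))))"

definition B_d_sober :: "('a \<Rightarrow> B4) set \<Rightarrow> bool" where
  "B_d_sober \<tau> \<longleftrightarrow> d_sober (Blevel \<tau> tt) (Blevel \<tau> ff)"

end

theory Submission
  imports Defs
begin

definition topo :: "'a set set \<Rightarrow> bool" where
  "topo T \<longleftrightarrow> UNIV \<in> T \<and> (\<forall>S. S \<subseteq> T \<longrightarrow> \<Union>S \<in> T) \<and> (\<forall>U V. U \<in> T \<longrightarrow> V \<in> T \<longrightarrow> U \<inter> V \<in> T)"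

definition irr :: "'a set set \<Rightarrow> 'a set \<Rightarrow> bool" where
  "irr T C \<longleftrightarrow> -C \<in> T \<and> C \<noteq> {} \<and>
     (\<forall>M N. -M \<in> T \<longrightarrow> -N \<in> T \<longrightarrow> C \<subseteq> M \<union> N \<longrightarrow> C \<subseteq> M \<or> C \<subseteq> N)"

definition cl :: "'a set set \<Rightarrow> 'a \<Rightarrow> 'a set" where
  "cl T x = \<Inter>{C. -C \<in> T \<and> x \<in> C}"

definition PP :: "'a set set \<Rightarrow> 'a set set \<Rightarrow> 'a set \<Rightarrow> 'a set \<Rightarrow> bool" where
  "PP T1 T2 C1 C2 \<longleftrightarrow> irr T1 C1 \<and> irr T2 C2 \<and>
    (\<forall>M1 M2. -M1 \<in> T1 \<longrightarrow> -M2 \<in> T2 \<longrightarrow> M1 \<union> M2 = UNIV \<longrightarrow> C1 \<subseteq> M1 \<or> C2 \<subseteq> M2) \<and>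
    (\<forall>M1 M2. -M1 \<in> T1 \<longrightarrow> -M2 \<in> T2 \<longrightarrow> M1 \<inter> M2 = {} \<longrightarrow> \<not> (C1 \<subseteq> M1 \<and> C2 \<subseteq> M2))"

lemma cl_closed: assumes "topo T" shows "- cl T x \<in> T"
proof -
  have "- cl T x = \<Union>(uminus ` {C. -C \<in> T \<and> x \<in> C})" unfolding cl_def by auto
  moreover have "uminus ` {C. -C \<in> T \<and> x \<in> C} \<subseteq> T" by auto
  moreover have "\<Union>(uminus ` {C. -C \<in> T \<and> x \<in> C}) \<in> T" using assms calculation(2) unfolding topo_def by blast
  ultimately show ?thesis by simp
qed

lemma cl_in: "x \<in> cl T x" unfolding cl_def by auto

lemma cl_least: "-C \<in> T \<Longrightarrow> x \<in> C \<Longrightarrow> cl T x \<subseteq> C" unfolding cl_def by auto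

lemma K: assumes "topo T" "-C \<in> T"
  shows "(\<forall>U\<in>T. (U \<inter> C \<noteq> {}) = (x \<in> U)) \<longleftrightarrow> C = cl T x"
proof
  assume H: "\<forall>U\<in>T. (U \<inter> C \<noteq> {}) = (x \<in> U)"
  have "(-C \<inter> C \<noteq> {}) = (x \<in> -C)" using H assms(2) by (rule bspec)
  hence "x \<in> C" by simp
  hence 1: "cl T x \<subseteq> C" by (rule cl_least[OF assms(2)])
  have "C \<subseteq> cl T x"
  proof
    fix y assume "y \<in> C"
    show "y \<in> cl T x"
    proof (rule ccontr)
      assume "y \<notin> cl T x"
      hence "(- cl T x) \<inter> C \<noteq> {}" using \<open>y \<in> C\<close> by auto
      moreover have "((- cl T x) \<inter> C \<noteq> {}) = (x \<in> - cl T x)" using H cl_closed[OF assms(1)] by (rule bspec)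
      ultimately have "x \<in> - cl T x" by simp
      thus False using cl_in[of x T] by simp
    qed
  qed
  with 1 show "C = cl T x" by auto
next
  assume E: "C = cl T x"
  show "\<forall>U\<in>T. (U \<inter> C \<noteq> {}) = (x \<in> U)"
  proof
    fix U assume "U \<in> T"
    show "(U \<inter> C \<noteq> {}) = (x \<in> U)"
    proof
      assume "U \<inter> C \<noteq> {}"
      show "x \<in> U"
      proof (rule ccontr)
        assume "x \<notin> U"
        moreover have "- (- U) \<in> T" using \<open>U \<in> T\<close> by simp
        ultimately have "cl T x \<subseteq> -U" using cl_least[of "-U" T x] by simp
        thus False using \<open>U \<inter> C \<noteq> {}\<close> E by auto
      qed
    next
      assume "x \<in> U" thus "U \<inter> C \<noteq> {}" using E cl_in[of x T] by blast
    qed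
  qed
qed

lemma F: assumes "topo T" "frame_hom T p"
  shows "\<exists>C. irr T C \<and> (\<forall>U\<in>T. p U = (U \<inter> C \<noteq> {}))"
proof -
  define Op where "Op = \<Union>{U\<in>T. \<not> p U}"
  have "{U\<in>T. \<not> p U} \<subseteq> T" by auto
  hence OT: "Op \<in> T" using assms(1) unfolding topo_def Op_def by blast
  have pO: "\<not> p Op" using assms(2) unfolding frame_hom_def Op_def by auto
  define C where "C = - Op"
  have char: "\<forall>U\<in>T. p U = (U \<inter> C \<noteq> {})"
  proof
    fix U assume U: "U \<in> T"
    show "p U = (U \<inter> C \<noteq> {})"
    proof
      assume pU: "p U"
      show "U \<inter> C \<noteq> {}"
      proof
        assume "U \<inter> C = {}"
        hence "U \<inter> Op = U" unfolding C_def by auto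
        hence "p (U \<inter> Op) = p U" by simp
        thus False using assms(2) U OT pU pO unfolding frame_hom_def by auto
      qed
    next
      assume "U \<inter> C \<noteq> {}"
      thus "p U" unfolding C_def Op_def using U by auto
    qed
  qed
  have "irr T C" unfolding irr_def
  proof (intro conjI allI impI)
    show "- C \<in> T" using OT C_def by simp
    show "C \<noteq> {}" using char assms unfolding topo_def frame_hom_def by auto
  next
    fix M N assume M: "-M \<in> T" and N: "-N \<in> T" and sub: "C \<subseteq> M \<union> N"
    have MN: "-M \<inter> -N \<in> T" using M N assms(1) unfolding topo_def by auto
    have "\<not> p (-M \<inter> -N)" using char MN sub by auto
    hence "\<not> p (-M) \<or> \<not> p (-N)" using assms(2) M N unfolding frame_hom_def by auto
    thus "C \<subseteq> M \<or> C \<subseteq> N" using char M N by auto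
  qed
  with char show ?thesis by blast
qed

lemma G: assumes "topo T" "irr T C"
  shows "frame_hom T (\<lambda>U. U \<inter> C \<noteq> {})"
  unfolding frame_hom_def
proof (intro conjI allI impI)
  show "UNIV \<inter> C \<noteq> {}" using assms(2) unfolding irr_def by auto
next
  fix U V assume U: "U \<in> T" and V: "V \<in> T"
  show "(U \<inter> V \<inter> C \<noteq> {}) = (U \<inter> C \<noteq> {} \<and> V \<inter> C \<noteq> {})"
  proof
    assume "U \<inter> C \<noteq> {} \<and> V \<inter> C \<noteq> {}"
    moreover have "C \<subseteq> -U \<union> -V \<Longrightarrow> C \<subseteq> -U \<or> C \<subseteq> -V"
      using assms(2) U V unfolding irr_def by auto
    ultimately show "U \<inter> V \<inter> C \<noteq> {}" by blast
  qed auto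
next
  fix S :: "'a set set" assume "S \<subseteq> T"
  show "(\<Union>S \<inter> C \<noteq> {}) = (\<exists>U\<in>S. U \<inter> C \<noteq> {})" by blast
qed

lemma ex1_iff: assumes "\<And>x. P x = Q x" shows "Ex1 P = Ex1 Q"
proof -
  have "P = Q" using assms by (rule ext)
  thus ?thesis by simp
qed

lemma setmain: assumes T1: "topo T1" and T2: "topo T2"
  shows "d_sober T1 T2 \<longleftrightarrow> (\<forall>C1 C2. PP T1 T2 C1 C2 \<longrightarrow> (\<exists>!x. C1 = cl T1 x \<and> C2 = cl T2 x))"
proof
  assume ds: "d_sober T1 T2"
  show "\<forall>C1 C2. PP T1 T2 C1 C2 \<longrightarrow> (\<exists>!x. C1 = cl T1 x \<and> C2 = cl T2 x)"
  proof (intro allI impI)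
    fix C1 C2 assume P: "PP T1 T2 C1 C2"
    hence i1: "irr T1 C1" and i2: "irr T2 C2"
      and pa: "\<forall>M1 M2. -M1 \<in> T1 \<longrightarrow> -M2 \<in> T2 \<longrightarrow> M1 \<union> M2 = UNIV \<longrightarrow> C1 \<subseteq> M1 \<or> C2 \<subseteq> M2"
      and pb: "\<forall>M1 M2. -M1 \<in> T1 \<longrightarrow> -M2 \<in> T2 \<longrightarrow> M1 \<inter> M2 = {} \<longrightarrow> \<not> (C1 \<subseteq> M1 \<and> C2 \<subseteq> M2)"
      unfolding PP_def by auto
    have dp: "d_point T1 T2 (\<lambda>U. U \<inter> C1 \<noteq> {}) (\<lambda>U. U \<inter> C2 \<noteq> {})"
      unfolding d_point_def
    proof (intro conjI allI impI)
      show "frame_hom T1 (\<lambda>U. U \<inter> C1 \<noteq> {})" using G T1 i1 by blast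
      show "frame_hom T2 (\<lambda>U. U \<inter> C2 \<noteq> {})" using G T2 i2 by blast
    next
      fix U V assume U: "U \<in> T1" and V: "V \<in> T2" and "U \<inter> V = {}"
      hence "-U \<union> -V = UNIV" by auto
      moreover have "-(-U) \<in> T1" "-(-V) \<in> T2" using U V by auto
      ultimately show "\<not> U \<inter> C1 \<noteq> {} \<or> \<not> V \<inter> C2 \<noteq> {}" using pa[rule_format, of "-U" "-V"] by auto
    next
      fix U V assume U: "U \<in> T1" and V: "V \<in> T2" and "U \<union> V = UNIV"
      hence "-U \<inter> -V = {}" by auto
      moreover have "-(-U) \<in> T1" "-(-V) \<in> T2" using U V by auto
      ultimately show "U \<inter> C1 \<noteq> {} \<or> V \<inter> C2 \<noteq> {}" using pb[rule_format, of "-U" "-V"] by auto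
    qed
    have eq: "((\<forall>U\<in>T1. (U \<inter> C1 \<noteq> {}) = (x \<in> U)) \<and> (\<forall>V\<in>T2. (V \<inter> C2 \<noteq> {}) = (x \<in> V)))
        \<longleftrightarrow> (C1 = cl T1 x \<and> C2 = cl T2 x)" for x
    proof -
      have c1: "-C1 \<in> T1" and c2: "-C2 \<in> T2" using i1 i2 unfolding irr_def by auto
      show ?thesis by (simp only: K[OF T1 c1, of x] K[OF T2 c2, of x])
    qed
    have "\<exists>!x. (\<forall>U\<in>T1. (U \<inter> C1 \<noteq> {}) = (x \<in> U)) \<and> (\<forall>V\<in>T2. (V \<inter> C2 \<noteq> {}) = (x \<in> V))"
      by (rule ds[unfolded d_sober_def, rule_format, OF dp])
    thus "\<exists>!x. C1 = cl T1 x \<and> C2 = cl T2 x" by (rule iffD1[OF ex1_iff[OF eq]])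
  qed
next
  assume R: "\<forall>C1 C2. PP T1 T2 C1 C2 \<longrightarrow> (\<exists>!x. C1 = cl T1 x \<and> C2 = cl T2 x)"
  show "d_sober T1 T2" unfolding d_sober_def
  proof (intro allI impI)
    fix p1 p2 assume dp: "d_point T1 T2 p1 p2"
    have fh1: "frame_hom T1 p1" and fh2: "frame_hom T2 p2"
      and dc1: "\<forall>U V. U \<in> T1 \<longrightarrow> V \<in> T2 \<longrightarrow> U \<inter> V = {} \<longrightarrow> \<not> p1 U \<or> \<not> p2 V"
      and dc2: "\<forall>U V. U \<in> T1 \<longrightarrow> V \<in> T2 \<longrightarrow> U \<union> V = UNIV \<longrightarrow> p1 U \<or> p2 V"
      using dp unfolding d_point_def by auto
    obtain C1 where i1: "irr T1 C1" and c1: "\<forall>U\<in>T1. p1 U = (U \<inter> C1 \<noteq> {})"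
      using F[OF T1 fh1] by blast
    obtain C2 where i2: "irr T2 C2" and c2: "\<forall>U\<in>T2. p2 U = (U \<inter> C2 \<noteq> {})"
      using F[OF T2 fh2] by blast
    have P: "PP T1 T2 C1 C2" unfolding PP_def
    proof (intro conjI allI impI i1 i2)
      fix M1 M2 assume M1: "-M1 \<in> T1" and M2: "-M2 \<in> T2" and "M1 \<union> M2 = UNIV"
      hence "-M1 \<inter> -M2 = {}" by auto
      hence "\<not> p1 (-M1) \<or> \<not> p2 (-M2)" by (rule dc1[rule_format, OF M1 M2])
      thus "C1 \<subseteq> M1 \<or> C2 \<subseteq> M2" using c1 c2 M1 M2 by auto
    next
      fix M1 M2 assume M1: "-M1 \<in> T1" and M2: "-M2 \<in> T2" and "M1 \<inter> M2 = {}"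
      hence "-M1 \<union> -M2 = UNIV" by auto
      hence "p1 (-M1) \<or> p2 (-M2)" by (rule dc2[rule_format, OF M1 M2])
      thus "\<not> (C1 \<subseteq> M1 \<and> C2 \<subseteq> M2)" using c1 c2 M1 M2 by auto
    qed
    have eq: "((\<forall>U\<in>T1. p1 U = (x \<in> U)) \<and> (\<forall>V\<in>T2. p2 V = (x \<in> V)))
        \<longleftrightarrow> (C1 = cl T1 x \<and> C2 = cl T2 x)" for x
    proof -
      have k1: "-C1 \<in> T1" and k2: "-C2 \<in> T2" using i1 i2 unfolding irr_def by auto
      have e1: "(\<forall>U\<in>T1. p1 U = (x \<in> U)) \<longleftrightarrow> (\<forall>U\<in>T1. (U \<inter> C1 \<noteq> {}) = (x \<in> U))" using c1 by auto
      have e2: "(\<forall>U\<in>T2. p2 U = (x \<in> U)) \<longleftrightarrow> (\<forall>U\<in>T2. (U \<inter> C2 \<noteq> {}) = (x \<in> U))" using c2 by auto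
      show ?thesis by (simp only: e1 e2 K[OF T1 k1, of x] K[OF T2 k2, of x])
    qed
    have "\<exists>!x. C1 = cl T1 x \<and> C2 = cl T2 x" by (rule R[rule_format, OF P])
    thus "\<exists>!x. (\<forall>U\<in>T1. p1 U = (x \<in> U)) \<and> (\<forall>V\<in>T2. p2 V = (x \<in> V))" by (rule iffD2[OF ex1_iff[OF eq]])
  qed
qed

definition s1 :: "('a \<Rightarrow> B4) \<Rightarrow> 'a set" where "s1 g = {x. fst (g x)}"
definition s2 :: "('a \<Rightarrow> B4) \<Rightarrow> 'a set" where "s2 g = {x. snd (g x)}"
definition mk :: "'a set \<Rightarrow> 'a set \<Rightarrow> ('a \<Rightarrow> B4)" where "mk A B = (\<lambda>x. (x \<in> A, x \<in> B))"

lemma s_mk[simp]: "s1 (mk A B) = A" "s2 (mk A B) = B"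
  by (auto simp: s1_def s2_def mk_def)

lemma mk_s: "mk (s1 g) (s2 g) = g"
  by (auto simp: s1_def s2_def mk_def fun_eq_iff prod_eq_iff)

lemma g_eq: "(g = h) \<longleftrightarrow> s1 g = s1 h \<and> s2 g = s2 h"
  by (metis mk_s)

lemma s_const[simp]: "s1 (\<lambda>_. top) = UNIV" "s2 (\<lambda>_. top) = UNIV" "s1 (\<lambda>_. bot) = {}" "s2 (\<lambda>_. bot) = {}"
  by (auto simp: s1_def s2_def)

lemma s_inf[simp]: "s1 (inf f g) = s1 f \<inter> s1 g" "s2 (inf f g) = s2 f \<inter> s2 g"
  by (auto simp: s1_def s2_def)

lemma s_sup[simp]: "s1 (sup f g) = s1 f \<union> s1 g" "s2 (sup f g) = s2 f \<union> s2 g"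
  by (auto simp: s1_def s2_def)

lemma s_uminus[simp]: "s1 (- f) = - s1 f" "s2 (- f) = - s2 f"
  by (auto simp: s1_def s2_def)

lemma s_Sup: "s1 (Sup F) = (\<Union>f\<in>F. s1 f)" "s2 (Sup F) = (\<Union>f\<in>F. s2 f)"
  by (auto simp: s1_def s2_def fst_SUP snd_SUP)

lemma s_Inf: "s1 (Inf F) = (\<Inter>f\<in>F. s1 f)" "s2 (Inf F) = (\<Inter>f\<in>F. s2 f)"
  by (auto simp: s1_def s2_def fst_INF snd_INF)

lemma cut_tt: "Bcut l tt = s1 l" by (auto simp: Bcut_def tt_def s1_def less_eq_prod_def)
lemma cut_ff: "Bcut l ff = s2 l" by (auto simp: Bcut_def ff_def s2_def less_eq_prod_def)

lemma level_tt: "Blevel \<tau> tt = s1 ` \<tau>" by (simp add: Blevel_def cut_tt)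
lemma level_ff: "Blevel \<tau> ff = s2 ` \<tau>" by (simp add: Blevel_def cut_ff)

lemma le_iff: "(g \<le> m) \<longleftrightarrow> s1 g \<subseteq> s1 m \<and> s2 g \<subseteq> s2 m"
  by (auto simp: s1_def s2_def le_fun_def less_eq_prod_def)

lemma scal_tt: "(Bscal tt g \<le> m) \<longleftrightarrow> s1 g \<subseteq> s1 m"
  by (auto simp: Bscal_def tt_def s1_def le_fun_def less_eq_prod_def)

lemma scal_ff: "(Bscal ff g \<le> m) \<longleftrightarrow> s2 g \<subseteq> s2 m"
  by (auto simp: Bscal_def ff_def s2_def le_fun_def less_eq_prod_def)

lemma nbot: "(\<forall>z. m z \<noteq> bot) \<longleftrightarrow> s1 m \<union> s2 m = UNIV"
  by (auto simp: s1_def s2_def prod_eq_iff)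

lemma ntop: "(\<forall>z. m z \<noteq> top) \<longleftrightarrow> s1 m \<inter> s2 m = {}"
  by (auto simp: s1_def s2_def prod_eq_iff)

lemma Bsub_eq: "Bsub g m = (s1 g \<subseteq> s1 m, s2 g \<subseteq> s2 m)"
  by (auto simp: Bsub_def bimp_def s1_def s2_def prod_eq_iff fst_INF snd_INF)

lemma point_le: "(Bpoint x \<le> g) \<longleftrightarrow> x \<in> s1 g \<and> x \<in> s2 g"
  by (auto simp: Bpoint_def le_fun_def s1_def s2_def less_eq_prod_def)

lemma mk_in:
  assumes tau: "Btopology \<tau>" and A: "A \<in> s1 ` \<tau>" and B: "B \<in> s2 ` \<tau>"
  shows "mk A B \<in> \<tau>"
proof -
  obtain l where l: "l \<in> \<tau>" "A = s1 l" using A by auto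
  obtain h where h: "h \<in> \<tau>" "B = s2 h" using B by auto
  have c: "(\<lambda>_. b) \<in> \<tau>" for b using tau unfolding Btopology_def by blast
  have i: "\<And>f k. f \<in> \<tau> \<Longrightarrow> k \<in> \<tau> \<Longrightarrow> inf f k \<in> \<tau>" using tau unfolding Btopology_def by blast
  have a1: "inf l (\<lambda>_. (True, False)) \<in> \<tau>" by (rule i[OF l(1) c])
  have a2: "inf h (\<lambda>_. (False, True)) \<in> \<tau>" by (rule i[OF h(1) c])
  have "{inf l (\<lambda>_. (True, False)), inf h (\<lambda>_. (False, True))} \<subseteq> \<tau>" using a1 a2 by auto
  hence "Sup {inf l (\<lambda>_. (True, False)), inf h (\<lambda>_. (False, True))} \<in> \<tau>"
    using tau unfolding Btopology_def by blast
  moreover have "Sup {inf l (\<lambda>_. (True, False)), inf h (\<lambda>_. (False, True))} = mk A B"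
    by (simp add: g_eq l h, auto simp: s1_def s2_def)
  ultimately show ?thesis by simp
qed

lemma mem_tau: assumes "Btopology \<tau>"
  shows "g \<in> \<tau> \<longleftrightarrow> s1 g \<in> s1 ` \<tau> \<and> s2 g \<in> s2 ` \<tau>"
  using mk_in[OF assms, of "s1 g" "s2 g"] by (auto simp: mk_s)

lemma closed_iff: assumes "Btopology \<tau>"
  shows "Bclosed \<tau> g \<longleftrightarrow> - s1 g \<in> s1 ` \<tau> \<and> - s2 g \<in> s2 ` \<tau>"
  unfolding Bclosed_def mem_tau[OF assms] by simp

lemma topos: assumes tau: "Btopology \<tau>"
  shows "topo (s1 ` \<tau>)" "topo (s2 ` \<tau>)"
proof -
  have c: "(\<lambda>_. b) \<in> \<tau>" for b using tau unfolding Btopology_def by blast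
  have i: "\<And>f k. f \<in> \<tau> \<Longrightarrow> k \<in> \<tau> \<Longrightarrow> inf f k \<in> \<tau>" using tau unfolding Btopology_def by blast
  have su: "\<And>S. S \<subseteq> \<tau> \<Longrightarrow> Sup S \<in> \<tau>" using tau unfolding Btopology_def by blast
  have e1: "{} \<in> s1 ` \<tau>" using c[of bot] by (metis s_const(3) image_eqI)
  have e2: "{} \<in> s2 ` \<tau>" using c[of bot] by (metis s_const(4) image_eqI)
  have u1: "UNIV \<in> s1 ` \<tau>" using c[of top] by (metis s_const(1) image_eqI)
  have u2: "UNIV \<in> s2 ` \<tau>" using c[of top] by (metis s_const(2) image_eqI)
  show "topo (s1 ` \<tau>)" unfolding topo_def
  proof (intro conjI allI impI u1)
    fix S assume S: "S \<subseteq> s1 ` \<tau>"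
    have "(\<lambda>U. mk U {}) ` S \<subseteq> \<tau>" using mk_in[OF tau _ e2] S by auto
    hence "Sup ((\<lambda>U. mk U {}) ` S) \<in> \<tau>" by (rule su)
    moreover have "s1 (Sup ((\<lambda>U. mk U {}) ` S)) = \<Union>S" by (simp add: s_Sup)
    ultimately show "\<Union>S \<in> s1 ` \<tau>" by (metis image_eqI)
  next
    fix U V assume U: "U \<in> s1 ` \<tau>" and V: "V \<in> s1 ` \<tau>"
    have "inf (mk U UNIV) (mk V UNIV) \<in> \<tau>" using mk_in[OF tau U u2] mk_in[OF tau V u2] i by blast
    moreover have "s1 (inf (mk U UNIV) (mk V UNIV)) = U \<inter> V" by simp
    ultimately show "U \<inter> V \<in> s1 ` \<tau>" by (metis image_eqI)
  qed
  show "topo (s2 ` \<tau>)" unfolding topo_def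
  proof (intro conjI allI impI u2)
    fix S assume S: "S \<subseteq> s2 ` \<tau>"
    have "(\<lambda>U. mk {} U) ` S \<subseteq> \<tau>" using mk_in[OF tau e1] S by auto
    hence "Sup ((\<lambda>U. mk {} U) ` S) \<in> \<tau>" by (rule su)
    moreover have "s2 (Sup ((\<lambda>U. mk {} U) ` S)) = \<Union>S" by (simp add: s_Sup)
    ultimately show "\<Union>S \<in> s2 ` \<tau>" by (metis image_eqI)
  next
    fix U V assume U: "U \<in> s2 ` \<tau>" and V: "V \<in> s2 ` \<tau>"
    have "inf (mk UNIV U) (mk UNIV V) \<in> \<tau>" using mk_in[OF tau u1 U] mk_in[OF tau u1 V] i by blast
    moreover have "s2 (inf (mk UNIV U) (mk UNIV V)) = U \<inter> V" by simp
    ultimately show "U \<inter> V \<in> s2 ` \<tau>" by (metis image_eqI)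
  qed
qed

lemma irr_iff: assumes tau: "Btopology \<tau>"
  shows "Birreducible \<tau> g \<longleftrightarrow> irr (s1 ` \<tau>) (s1 g) \<and> irr (s2 ` \<tau>) (s2 g)"
proof -
  have c: "(\<lambda>_. b) \<in> \<tau>" for b using tau unfolding Btopology_def by blast
  have e1: "{} \<in> s1 ` \<tau>" using c[of bot] by (metis s_const(3) image_eqI)
  have e2: "{} \<in> s2 ` \<tau>" using c[of bot] by (metis s_const(4) image_eqI)
  note cl = closed_iff[OF tau]
  show ?thesis
  proof
    assume B: "Birreducible \<tau> g"
    have gc: "- s1 g \<in> s1 ` \<tau>" "- s2 g \<in> s2 ` \<tau>" using B cl unfolding Birreducible_def by auto
    have "Bsub g (\<lambda>_. bot) = bot" using B unfolding Birreducible_def by blast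
    hence ne: "s1 g \<noteq> {}" "s2 g \<noteq> {}" by (auto simp: Bsub_eq prod_eq_iff)
    have un: "Bsub g (sup m1 m2) = sup (Bsub g m1) (Bsub g m2)" if "Bclosed \<tau> m1" "Bclosed \<tau> m2" for m1 m2
      using B that unfolding Birreducible_def by blast
    show "irr (s1 ` \<tau>) (s1 g) \<and> irr (s2 ` \<tau>) (s2 g)" unfolding irr_def
    proof (intro conjI gc ne allI impI)
      fix M N assume M: "- M \<in> s1 ` \<tau>" and N: "- N \<in> s1 ` \<tau>" and sub: "s1 g \<subseteq> M \<union> N"
      have "Bclosed \<tau> (mk M UNIV)" "Bclosed \<tau> (mk N UNIV)" using cl M N e2 by auto
      from un[OF this] have "fst (Bsub g (sup (mk M UNIV) (mk N UNIV))) = fst (sup (Bsub g (mk M UNIV)) (Bsub g (mk N UNIV)))" by simp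
      thus "s1 g \<subseteq> M \<or> s1 g \<subseteq> N" using sub by (simp add: Bsub_eq)
    next
      fix M N assume M: "- M \<in> s2 ` \<tau>" and N: "- N \<in> s2 ` \<tau>" and sub: "s2 g \<subseteq> M \<union> N"
      have "Bclosed \<tau> (mk UNIV M)" "Bclosed \<tau> (mk UNIV N)" using cl M N e1 by auto
      from un[OF this] have "snd (Bsub g (sup (mk UNIV M) (mk UNIV N))) = snd (sup (Bsub g (mk UNIV M)) (Bsub g (mk UNIV N)))" by simp
      thus "s2 g \<subseteq> M \<or> s2 g \<subseteq> N" using sub by (simp add: Bsub_eq)
    qed
  next
    assume I: "irr (s1 ` \<tau>) (s1 g) \<and> irr (s2 ` \<tau>) (s2 g)"
    show "Birreducible \<tau> g" unfolding Birreducible_def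
    proof (intro conjI allI impI)
      show "Bclosed \<tau> g" using I cl unfolding irr_def by auto
    next
      fix b :: B4
      show "Bsub g (\<lambda>_. b) = b" using I unfolding irr_def
        by (cases b) (auto simp: Bsub_eq s1_def s2_def)
    next
      fix m1 m2 assume m1: "Bclosed \<tau> m1" and m2: "Bclosed \<tau> m2"
      have u1: "\<forall>M N. -M \<in> s1 ` \<tau> \<longrightarrow> -N \<in> s1 ` \<tau> \<longrightarrow> s1 g \<subseteq> M \<union> N \<longrightarrow> s1 g \<subseteq> M \<or> s1 g \<subseteq> N"
        and u2: "\<forall>M N. -M \<in> s2 ` \<tau> \<longrightarrow> -N \<in> s2 ` \<tau> \<longrightarrow> s2 g \<subseteq> M \<union> N \<longrightarrow> s2 g \<subseteq> M \<or> s2 g \<subseteq> N"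
        using I unfolding irr_def by blast+
      have c1: "- s1 m1 \<in> s1 ` \<tau>" "- s1 m2 \<in> s1 ` \<tau>" "- s2 m1 \<in> s2 ` \<tau>" "- s2 m2 \<in> s2 ` \<tau>"
        using m1 m2 cl by auto
      have a: "(s1 g \<subseteq> s1 m1 \<union> s1 m2) = (s1 g \<subseteq> s1 m1 \<or> s1 g \<subseteq> s1 m2)"
        using u1[rule_format, OF c1(1) c1(2)] by blast
      have b: "(s2 g \<subseteq> s2 m1 \<union> s2 m2) = (s2 g \<subseteq> s2 m1 \<or> s2 g \<subseteq> s2 m2)"
        using u2[rule_format, OF c1(3) c1(4)] by blast
      show "Bsub g (sup m1 m2) = sup (Bsub g m1) (Bsub g m2)"
        by (simp add: Bsub_eq a b)
    qed
  qed
qed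

lemma closure_eq: assumes tau: "Btopology \<tau>"
  shows "Bclosure \<tau> (Bpoint x) = mk (cl (s1 ` \<tau>) x) (cl (s2 ` \<tau>) x)"
proof -
  have c: "(\<lambda>_. b) \<in> \<tau>" for b using tau unfolding Btopology_def by blast
  have e1: "{} \<in> s1 ` \<tau>" using c[of bot] by (metis s_const(3) image_eqI)
  have e2: "{} \<in> s2 ` \<tau>" using c[of bot] by (metis s_const(4) image_eqI)
  note cl = closed_iff[OF tau]
  let ?G = "{g. Bclosed \<tau> g \<and> Bpoint x \<le> g}"
  have 1: "(\<Inter>f\<in>?G. s1 f) = cl (s1 ` \<tau>) x"
  proof
    show "(\<Inter>f\<in>?G. s1 f) \<subseteq> cl (s1 ` \<tau>) x"
    proof
      fix z assume z: "z \<in> (\<Inter>f\<in>?G. s1 f)"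
      show "z \<in> cl (s1 ` \<tau>) x" unfolding cl_def
      proof
        fix C assume C: "C \<in> {C. - C \<in> s1 ` \<tau> \<and> x \<in> C}"
        have "mk C UNIV \<in> ?G" using C cl e2 by (auto simp: point_le)
        thus "z \<in> C" using z by fastforce
      qed
    qed
  next
    show "cl (s1 ` \<tau>) x \<subseteq> (\<Inter>f\<in>?G. s1 f)"
    proof
      fix z assume z: "z \<in> cl (s1 ` \<tau>) x"
      show "z \<in> (\<Inter>f\<in>?G. s1 f)"
      proof
        fix f assume "f \<in> ?G"
        hence "- s1 f \<in> s1 ` \<tau>" "x \<in> s1 f" using cl by (auto simp: point_le)
        thus "z \<in> s1 f" using z unfolding cl_def by blast
      qed
    qed
  qed
  have 2: "(\<Inter>f\<in>?G. s2 f) = cl (s2 ` \<tau>) x"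
  proof
    show "(\<Inter>f\<in>?G. s2 f) \<subseteq> cl (s2 ` \<tau>) x"
    proof
      fix z assume z: "z \<in> (\<Inter>f\<in>?G. s2 f)"
      show "z \<in> cl (s2 ` \<tau>) x" unfolding cl_def
      proof
        fix C assume C: "C \<in> {C. - C \<in> s2 ` \<tau> \<and> x \<in> C}"
        have "mk UNIV C \<in> ?G" using C cl e1 by (auto simp: point_le)
        thus "z \<in> C" using z by fastforce
      qed
    qed
  next
    show "cl (s2 ` \<tau>) x \<subseteq> (\<Inter>f\<in>?G. s2 f)"
    proof
      fix z assume z: "z \<in> cl (s2 ` \<tau>) x"
      show "z \<in> (\<Inter>f\<in>?G. s2 f)"
      proof
        fix f assume "f \<in> ?G"
        hence "- s2 f \<in> s2 ` \<tau>" "x \<in> s2 f" using cl by (auto simp: point_le)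
        thus "z \<in> s2 f" using z unfolding cl_def by blast
      qed
    qed
  qed
  show ?thesis unfolding Bclosure_def g_eq s_Inf using 1 2 by simp
qed

lemma hyp_iff: assumes tau: "Btopology \<tau>"
  shows "(Birreducible \<tau> g
       \<and> (\<forall>m. Bclosed \<tau> m \<and> (\<forall>z. m z \<noteq> bot) \<longrightarrow> Bscal tt g \<le> m \<or> Bscal ff g \<le> m)
       \<and> (\<forall>m. Bclosed \<tau> m \<and> (\<forall>z. m z \<noteq> top) \<longrightarrow> \<not> g \<le> m))
     \<longleftrightarrow> PP (s1 ` \<tau>) (s2 ` \<tau>) (s1 g) (s2 g)"
proof -
  note cl = closed_iff[OF tau]
  have a: "(\<forall>m. Bclosed \<tau> m \<and> (\<forall>z. m z \<noteq> bot) \<longrightarrow> Bscal tt g \<le> m \<or> Bscal ff g \<le> m)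
    \<longleftrightarrow> (\<forall>M1 M2. -M1 \<in> s1 ` \<tau> \<longrightarrow> -M2 \<in> s2 ` \<tau> \<longrightarrow> M1 \<union> M2 = UNIV \<longrightarrow> s1 g \<subseteq> M1 \<or> s2 g \<subseteq> M2)"
  proof
    assume H: "\<forall>m. Bclosed \<tau> m \<and> (\<forall>z. m z \<noteq> bot) \<longrightarrow> Bscal tt g \<le> m \<or> Bscal ff g \<le> m"
    show "\<forall>M1 M2. -M1 \<in> s1 ` \<tau> \<longrightarrow> -M2 \<in> s2 ` \<tau> \<longrightarrow> M1 \<union> M2 = UNIV \<longrightarrow> s1 g \<subseteq> M1 \<or> s2 g \<subseteq> M2"
    proof (intro allI impI)
      fix M1 M2 assume "-M1 \<in> s1 ` \<tau>" "-M2 \<in> s2 ` \<tau>" "M1 \<union> M2 = UNIV"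
      hence "Bclosed \<tau> (mk M1 M2) \<and> (\<forall>z. mk M1 M2 z \<noteq> bot)" by (simp add: cl nbot)
      thus "s1 g \<subseteq> M1 \<or> s2 g \<subseteq> M2" using H[rule_format, of "mk M1 M2"] by (simp add: scal_tt scal_ff)
    qed
  next
    assume H: "\<forall>M1 M2. -M1 \<in> s1 ` \<tau> \<longrightarrow> -M2 \<in> s2 ` \<tau> \<longrightarrow> M1 \<union> M2 = UNIV \<longrightarrow> s1 g \<subseteq> M1 \<or> s2 g \<subseteq> M2"
    show "\<forall>m. Bclosed \<tau> m \<and> (\<forall>z. m z \<noteq> bot) \<longrightarrow> Bscal tt g \<le> m \<or> Bscal ff g \<le> m"
      using H by (auto simp: cl nbot scal_tt scal_ff)
  qed
  have b: "(\<forall>m. Bclosed \<tau> m \<and> (\<forall>z. m z \<noteq> top) \<longrightarrow> \<not> g \<le> m)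
    \<longleftrightarrow> (\<forall>M1 M2. -M1 \<in> s1 ` \<tau> \<longrightarrow> -M2 \<in> s2 ` \<tau> \<longrightarrow> M1 \<inter> M2 = {} \<longrightarrow> \<not> (s1 g \<subseteq> M1 \<and> s2 g \<subseteq> M2))"
  proof
    assume H: "\<forall>m. Bclosed \<tau> m \<and> (\<forall>z. m z \<noteq> top) \<longrightarrow> \<not> g \<le> m"
    show "\<forall>M1 M2. -M1 \<in> s1 ` \<tau> \<longrightarrow> -M2 \<in> s2 ` \<tau> \<longrightarrow> M1 \<inter> M2 = {} \<longrightarrow> \<not> (s1 g \<subseteq> M1 \<and> s2 g \<subseteq> M2)"
    proof (intro allI impI)
      fix M1 M2 assume "-M1 \<in> s1 ` \<tau>" "-M2 \<in> s2 ` \<tau>" "M1 \<inter> M2 = {}"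
      hence "Bclosed \<tau> (mk M1 M2) \<and> (\<forall>z. mk M1 M2 z \<noteq> top)" by (simp add: cl ntop)
      thus "\<not> (s1 g \<subseteq> M1 \<and> s2 g \<subseteq> M2)" using H[rule_format, of "mk M1 M2"] by (simp add: le_iff)
    qed
  next
    assume H: "\<forall>M1 M2. -M1 \<in> s1 ` \<tau> \<longrightarrow> -M2 \<in> s2 ` \<tau> \<longrightarrow> M1 \<inter> M2 = {} \<longrightarrow> \<not> (s1 g \<subseteq> M1 \<and> s2 g \<subseteq> M2)"
    show "\<forall>m. Bclosed \<tau> m \<and> (\<forall>z. m z \<noteq> top) \<longrightarrow> \<not> g \<le> m"
      using H by (auto simp: cl ntop le_iff)
  qed
  show ?thesis unfolding PP_def irr_iff[OF tau] a b by (simp only: conj_assoc)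
qed

theorem mainTheorem10:
  fixes \<tau> :: "('a \<Rightarrow> B4) set"
  assumes "Btopology \<tau>"
  shows "B_d_sober \<tau> \<longleftrightarrow>
    (\<forall>g. Birreducible \<tau> g
       \<and> (\<forall>m. Bclosed \<tau> m \<and> (\<forall>z. m z \<noteq> bot) \<longrightarrow> Bscal tt g \<le> m \<or> Bscal ff g \<le> m)
       \<and> (\<forall>m. Bclosed \<tau> m \<and> (\<forall>z. m z \<noteq> top) \<longrightarrow> \<not> g \<le> m)
       \<longrightarrow> (\<exists>!x. g = Bclosure \<tau> (Bpoint x)))"
proof -
  note tau = assms
  let ?T1 = "s1 ` \<tau>" and ?T2 = "s2 ` \<tau>"
  have e: "(g = Bclosure \<tau> (Bpoint x)) \<longleftrightarrow> (s1 g = cl ?T1 x \<and> s2 g = cl ?T2 x)" for g x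
    by (simp add: closure_eq[OF tau] g_eq)
  have r: "(\<forall>g. Birreducible \<tau> g
       \<and> (\<forall>m. Bclosed \<tau> m \<and> (\<forall>z. m z \<noteq> bot) \<longrightarrow> Bscal tt g \<le> m \<or> Bscal ff g \<le> m)
       \<and> (\<forall>m. Bclosed \<tau> m \<and> (\<forall>z. m z \<noteq> top) \<longrightarrow> \<not> g \<le> m)
       \<longrightarrow> (\<exists>!x. g = Bclosure \<tau> (Bpoint x)))
     \<longleftrightarrow> (\<forall>g. PP ?T1 ?T2 (s1 g) (s2 g) \<longrightarrow> (\<exists>!x. s1 g = cl ?T1 x \<and> s2 g = cl ?T2 x))"
    by (simp only: hyp_iff[OF tau] e)
  have r2: "(\<forall>g. PP ?T1 ?T2 (s1 g) (s2 g) \<longrightarrow> (\<exists>!x. s1 g = cl ?T1 x \<and> s2 g = cl ?T2 x))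
     \<longleftrightarrow> (\<forall>C1 C2. PP ?T1 ?T2 C1 C2 \<longrightarrow> (\<exists>!x. C1 = cl ?T1 x \<and> C2 = cl ?T2 x))"
  proof
    assume H: "\<forall>g. PP ?T1 ?T2 (s1 g) (s2 g) \<longrightarrow> (\<exists>!x. s1 g = cl ?T1 x \<and> s2 g = cl ?T2 x)"
    show "\<forall>C1 C2. PP ?T1 ?T2 C1 C2 \<longrightarrow> (\<exists>!x. C1 = cl ?T1 x \<and> C2 = cl ?T2 x)"
    proof (intro allI)
      fix C1 C2
      show "PP ?T1 ?T2 C1 C2 \<longrightarrow> (\<exists>!x. C1 = cl ?T1 x \<and> C2 = cl ?T2 x)"
        using H[rule_format, of "mk C1 C2"] by simp
    qed
  next
    assume H2: "\<forall>C1 C2. PP ?T1 ?T2 C1 C2 \<longrightarrow> (\<exists>!x. C1 = cl ?T1 x \<and> C2 = cl ?T2 x)"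
    show "\<forall>g. PP ?T1 ?T2 (s1 g) (s2 g) \<longrightarrow> (\<exists>!x. s1 g = cl ?T1 x \<and> s2 g = cl ?T2 x)"
    proof (intro allI impI)
      fix g assume "PP ?T1 ?T2 (s1 g) (s2 g)"
      thus "\<exists>!x. s1 g = cl ?T1 x \<and> s2 g = cl ?T2 x" by (rule H2[rule_format])
    qed
  qed
  show ?thesis
    unfolding B_d_sober_def level_tt level_ff r r2
    by (rule setmain[OF topos[OF tau]])
qed

end
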